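(* Let $A\subset\mathcal X$ be nonempty and $x\notin A$. For a path $\omega$: $\omega\in\Omega^{\rm opt}_{x,A}$ if and only if $\omega\in\Omega_{x,A}$ and every state of $\omega$ belongs to $C^+_A(x)$.
   Context: Setting: $\mathcal X$ finite, $H:\mathcal X\to\mathbb R$ non-constant, $q$ a stochastic, symmetric, irreducible matrix on $\mathcal X$. A path is a finite sequence $\omega=(\omega_1,\dots,\omega_n)$ with $q(\omega_i,\omega_{i+1})>0$ ($n=1$ allowed). $\Phi_\omega=\max_iH(\omega_i)$, $\Phi(x,y)=\min$ of $\Phi_\omega$ over paths from $x$ to $y$, $\Phi(B,D)=\min_{x\in B,y\in D}\Phi(x,y)$. $\Omega_{x,A}$ = paths from $x$ ending in $A$ and not visiting $A$ before their last state; $\Omega^{\rm opt}_{x,A}=\{\omega\in\Omega_{x,A}:\Phi_\omega=\Phi(x,A)\}$. Connected set: at least two elements, any two joined by a path inside it. $\partial B=\{y\notin B:\exists x\in B,q(x,y)>0\}$. A cycle is a nonempty $C$ that is a singleton or connected with $\max_CH<\min_{\partial C}H$. Initial cycle $C_A(x)=\{x\}\cup\{z:\Phi(x,z)<\Phi(x,A)\}$. Relevant cycle $C^+_A(x)$: the minimal (for inclusion) cycle $C$ with $C_A(x)\subsetneq C$ (cycles containing $x$ are totally ordered by inclusion). Convention: $A$ contains every $y$ such that every path from $x$ to $y$ meets $A$. *)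

theory Defs
  imports Complex_Main
begin

definition is_path :: "('a \<Rightarrow> 'a \<Rightarrow> real) \<Rightarrow> 'a list \<Rightarrow> bool" where
  "is_path q w \<longleftrightarrow> w \<noteq> [] \<and> (\<forall>i. Suc i < length w \<longrightarrow> q (w ! i) (w ! Suc i) > 0)"

definition PhiP :: "('a \<Rightarrow> real) \<Rightarrow> 'a list \<Rightarrow> real" where
  "PhiP H w = Max (H ` set w)"

definition Phi :: "('a \<Rightarrow> 'a \<Rightarrow> real) \<Rightarrow> ('a \<Rightarrow> real) \<Rightarrow> 'a \<Rightarrow> 'a \<Rightarrow> real" where
  "Phi q H x y = Min {PhiP H w | w. is_path q w \<and> hd w = x \<and> last w = y}"

definition PhiSet :: "('a \<Rightarrow> 'a \<Rightarrow> real) \<Rightarrow> ('a \<Rightarrow> real) \<Rightarrow> 'a set \<Rightarrow> 'a set \<Rightarrow> real" where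
  "PhiSet q H B D = Min {Phi q H x y | x y. x \<in> B \<and> y \<in> D}"

definition Omega :: "('a \<Rightarrow> 'a \<Rightarrow> real) \<Rightarrow> 'a \<Rightarrow> 'a set \<Rightarrow> 'a list set" where
  "Omega q x A = {w. is_path q w \<and> hd w = x \<and> last w \<in> A \<and>
                     (\<forall>i. Suc i < length w \<longrightarrow> w ! i \<notin> A)}"

definition Omega_opt :: "('a \<Rightarrow> 'a \<Rightarrow> real) \<Rightarrow> ('a \<Rightarrow> real) \<Rightarrow> 'a \<Rightarrow> 'a set \<Rightarrow> 'a list set" where
  "Omega_opt q H x A = {w \<in> Omega q x A. PhiP H w = PhiSet q H {x} A}"

definition connected_set :: "('a \<Rightarrow> 'a \<Rightarrow> real) \<Rightarrow> 'a set \<Rightarrow> bool" where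
  "connected_set q C \<longleftrightarrow> (\<exists>a b. a \<in> C \<and> b \<in> C \<and> a \<noteq> b) \<and>
     (\<forall>a\<in>C. \<forall>b\<in>C. \<exists>w. is_path q w \<and> hd w = a \<and> last w = b \<and> set w \<subseteq> C)"

definition boundary :: "('a \<Rightarrow> 'a \<Rightarrow> real) \<Rightarrow> 'a set \<Rightarrow> 'a set" where
  "boundary q B = {y. y \<notin> B \<and> (\<exists>x\<in>B. q x y > 0)}"

text \<open>Cycle: nonempty, and either a singleton or connected with max_C H < min_{boundary C} H
  (the latter condition holds vacuously when the boundary is empty, min over empty set = +infinity).\<close>
definition is_cycle :: "('a \<Rightarrow> 'a \<Rightarrow> real) \<Rightarrow> ('a \<Rightarrow> real) \<Rightarrow> 'a set \<Rightarrow> bool" where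
  "is_cycle q H C \<longleftrightarrow> C \<noteq> {} \<and>
     ((\<exists>z. C = {z}) \<or> (connected_set q C \<and> (\<forall>z\<in>C. \<forall>y\<in>boundary q C. H z < H y)))"

definition init_cycle :: "('a \<Rightarrow> 'a \<Rightarrow> real) \<Rightarrow> ('a \<Rightarrow> real) \<Rightarrow> 'a set \<Rightarrow> 'a \<Rightarrow> 'a set" where
  "init_cycle q H A x = {x} \<union> {z. Phi q H x z < PhiSet q H {x} A}"

definition rel_cycle :: "('a \<Rightarrow> 'a \<Rightarrow> real) \<Rightarrow> ('a \<Rightarrow> real) \<Rightarrow> 'a set \<Rightarrow> 'a \<Rightarrow> 'a set" where
  "rel_cycle q H A x = (LEAST C. is_cycle q H C \<and> init_cycle q H A x \<subset> C)"

definition stochastic :: "('a::finite \<Rightarrow> 'a \<Rightarrow> real) \<Rightarrow> bool" where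
  "stochastic q \<longleftrightarrow> (\<forall>x y. 0 \<le> q x y) \<and> (\<forall>x. (\<Sum>y\<in>UNIV. q x y) = 1)"

definition symmetric_kernel :: "('a \<Rightarrow> 'a \<Rightarrow> real) \<Rightarrow> bool" where
  "symmetric_kernel q \<longleftrightarrow> (\<forall>x y. q x y = q y x)"

definition irreducible_kernel :: "('a \<Rightarrow> 'a \<Rightarrow> real) \<Rightarrow> bool" where
  "irreducible_kernel q \<longleftrightarrow> (\<forall>x y. \<exists>w. is_path q w \<and> hd w = x \<and> last w = y)"

end

theory Submission
  imports Defs
begin

lemma PhiP_ge: "z \<in> set w \<Longrightarrow> H z \<le> PhiP H w"
  unfolding PhiP_def by (intro Max_ge) auto

lemma PhiP_in: "w \<noteq> [] \<Longrightarrow> PhiP H w \<in> H ` set w"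
  unfolding PhiP_def by (intro Max_in) auto

lemma PhiP_le_iff: "w \<noteq> [] \<Longrightarrow> PhiP H w \<le> c \<longleftrightarrow> (\<forall>z\<in>set w. H z \<le> c)"
  unfolding PhiP_def by (subst Max_le_iff) auto

lemma path_ne: "is_path q w \<Longrightarrow> w \<noteq> []" by (simp add: is_path_def)

lemma Phi_set_fin: fixes H :: "'a::finite \<Rightarrow> real" shows "finite {PhiP H w | w. is_path q w \<and> hd w = x \<and> last w = y}"
  by (rule finite_subset[of _ "range H"]) (auto dest!: path_ne dest: PhiP_in[of _ H])

lemma Phi_le: fixes H :: "'a::finite \<Rightarrow> real" shows "is_path q w \<Longrightarrow> hd w = x \<Longrightarrow> last w = y \<Longrightarrow> Phi q H x y \<le> PhiP H w"
  unfolding Phi_def by (rule Min_le[OF Phi_set_fin]) auto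

lemma Phi_attained:
  fixes H :: "'a::finite \<Rightarrow> real"
  assumes "irreducible_kernel q"
  shows "\<exists>w. is_path q w \<and> hd w = x \<and> last w = y \<and> Phi q H x y = PhiP H w"
proof -
  have ne: "{PhiP H w | w. is_path q w \<and> hd w = x \<and> last w = y} \<noteq> {}"
    using assms unfolding irreducible_kernel_def by blast
  have "Phi q H x y \<in> {PhiP H w | w. is_path q w \<and> hd w = x \<and> last w = y}"
    unfolding Phi_def by (rule Min_in[OF Phi_set_fin ne])
  then show ?thesis by auto
qed

lemma is_path_take: "is_path q w \<Longrightarrow> i < length w \<Longrightarrow> is_path q (take (Suc i) w)"
  unfolding is_path_def by auto

lemma last_take_Suc: "i < length w \<Longrightarrow> last (take (Suc i) w) = w ! i"
  by (metis last_snoc take_Suc_conv_app_nth)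

lemma hd_take_Suc: "w \<noteq> [] \<Longrightarrow> hd (take (Suc i) w) = hd w"
  by (cases w) auto

lemma PhiP_take: "w \<noteq> [] \<Longrightarrow> PhiP H (take (Suc i) w) \<le> PhiP H w"
  unfolding PhiP_def by (rule Max_mono) (auto dest: in_set_takeD simp: neq_Nil_conv)

lemma is_path_append:
  assumes "is_path q u" "is_path q v" "q (last u) (hd v) > 0"
  shows "is_path q (u @ v)"
  unfolding is_path_def
proof (intro conjI allI impI)
  show "u @ v \<noteq> []" using assms by (simp add: is_path_def)
next
  fix i assume i: "Suc i < length (u @ v)"
  have u: "u \<noteq> []" "\<forall>i. Suc i < length u \<longrightarrow> q (u ! i) (u ! Suc i) > 0"
    and v: "v \<noteq> []" "\<forall>i. Suc i < length v \<longrightarrow> q (v ! i) (v ! Suc i) > 0"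
    using assms by (auto simp: is_path_def)
  consider "Suc i < length u" | "Suc i = length u" | "Suc i > length u" by linarith
  then show "q ((u @ v) ! i) ((u @ v) ! Suc i) > 0"
  proof cases
    case 1 then show ?thesis using u by (simp add: nth_append)
  next
    case 2 then have "i = length u - Suc 0" by simp
    then show ?thesis using assms(3) u v
      by (simp add: nth_append last_conv_nth hd_conv_nth)
  next
    case 3
    then obtain j where j: "i = length u + j" by (metis le_add_diff_inverse less_Suc_eq_le less_imp_le_nat)
    then have "Suc j < length v" using i 3 by simp
    then show ?thesis using v j by (simp add: nth_append)
  qed
qed

lemma is_path_rev:
  assumes "symmetric_kernel q" "is_path q w"
  shows "is_path q (rev w)"
  unfolding is_path_def
proof (intro conjI allI impI)
  show "rev w \<noteq> []" using assms by (simp add: is_path_def)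
next
  fix i assume i: "Suc i < length (rev w)"
  define j where "j = length w - Suc (Suc i)"
  have j: "Suc j < length w" "length w - Suc i = Suc j" "length w - Suc (Suc i) = j"
    using i by (auto simp: j_def)
  have "q (w ! j) (w ! Suc j) > 0" using assms(2) j by (simp add: is_path_def)
  then show "q (rev w ! i) (rev w ! Suc i) > 0"
    using i j assms(1) by (simp add: rev_nth symmetric_kernel_def)
qed

lemma is_path_tl: "is_path q w \<Longrightarrow> tl w \<noteq> [] \<Longrightarrow> is_path q (tl w)"
  unfolding is_path_def by (auto simp: nth_tl)

lemma path_set_K:
  fixes H :: "'a::finite \<Rightarrow> real"
  assumes "is_path q w" "hd w = x" "PhiP H w \<le> h"
  shows "set w \<subseteq> {z. Phi q H x z \<le> h}"
proof
  fix z assume "z \<in> set w"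
  then obtain i where i: "i < length w" "w ! i = z" by (auto simp: in_set_conv_nth)
  have "Phi q H x z \<le> PhiP H (take (Suc i) w)"
    using assms i by (intro Phi_le is_path_take) (auto simp: last_take_Suc hd_take_Suc path_ne)
  also have "\<dots> \<le> PhiP H w" using assms by (intro PhiP_take path_ne)
  finally show "z \<in> {z. Phi q H x z \<le> h}" using assms by simp
qed

theorem lemma3p8:
  fixes q :: "'a::finite \<Rightarrow> 'a \<Rightarrow> real" and H :: "'a \<Rightarrow> real"
    and A :: "'a set" and x :: 'a and w :: "'a list"
  assumes "stochastic q" and "symmetric_kernel q" and "irreducible_kernel q"
    and "\<exists>u v. H u \<noteq> H v"
    and "A \<noteq> {}" and "x \<notin> A"
    and "\<forall>y. (\<forall>p. is_path q p \<and> hd p = x \<and> last p = y \<longrightarrow> set p \<inter> A \<noteq> {}) \<longrightarrow> y \<in> A"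
  shows "w \<in> Omega_opt q H x A \<longleftrightarrow> w \<in> Omega q x A \<and> set w \<subseteq> rel_cycle q H A x"
proof -
  note sym = assms(2) and irr = assms(3)
  define h where "h = PhiSet q H {x} A"
  define K where "K = {z. Phi q H x z \<le> h}"
  have hs: "h = Min ((\<lambda>y. Phi q H x y) ` A)"
    unfolding h_def PhiSet_def by (rule arg_cong[where f=Min]) auto
  have h_le: "\<And>y. y \<in> A \<Longrightarrow> h \<le> Phi q H x y" unfolding hs by (rule Min_le) auto
  have "h \<in> (\<lambda>y. Phi q H x y) ` A" unfolding hs
    by (rule Min_in) (use assms(5) in auto)
  then obtain a where a: "a \<in> A" "Phi q H x a = h" by auto
  have H_le_Phi: "\<And>z. H z \<le> Phi q H x z"
  proof -
    fix z
    obtain p where p: "is_path q p" "hd p = x" "last p = z" "Phi q H x z = PhiP H p"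
      using Phi_attained[OF irr] by blast
    have "z \<in> set p" using p path_ne[OF p(1)] by auto
    then show "H z \<le> Phi q H x z" using p PhiP_ge by metis
  qed
  have Hx_le: "\<And>z. H x \<le> Phi q H x z"
  proof -
    fix z
    obtain p where p: "is_path q p" "hd p = x" "last p = z" "Phi q H x z = PhiP H p"
      using Phi_attained[OF irr] by blast
    have "x \<in> set p" using p path_ne[OF p(1)] by auto
    then show "H x \<le> Phi q H x z" using p PhiP_ge by metis
  qed
  have HK: "\<And>z. z \<in> K \<Longrightarrow> H z \<le> h" unfolding K_def using H_le_Phi order_trans by blast
  have xK: "x \<in> K"
  proof -
    have "Phi q H x x \<le> PhiP H [x]" by (rule Phi_le) (auto simp: is_path_def)
    also have "\<dots> = H x" by (simp add: PhiP_def)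
    also have "\<dots> \<le> h" using Hx_le[of a] a by simp
    finally show ?thesis by (simp add: K_def)
  qed
  have aK: "a \<in> K" using a by (simp add: K_def)
  have path_to: "\<And>z. z \<in> K \<Longrightarrow> \<exists>p. is_path q p \<and> hd p = x \<and> last p = z \<and> set p \<subseteq> K"
  proof -
    fix z assume z: "z \<in> K"
    obtain p where p: "is_path q p" "hd p = x" "last p = z" "Phi q H x z = PhiP H p"
      using Phi_attained[OF irr] by blast
    have "set p \<subseteq> K" unfolding K_def using p z by (intro path_set_K) (auto simp: K_def)
    then show "\<exists>p. is_path q p \<and> hd p = x \<and> last p = z \<and> set p \<subseteq> K" using p by blast
  qed
  have init_sub: "init_cycle q H A x \<subset> K"
  proof -
    have "init_cycle q H A x \<subseteq> K" using xK unfolding init_cycle_def K_def h_def by auto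
    moreover have "a \<notin> init_cycle q H A x" using a assms(6) unfolding init_cycle_def h_def by auto
    ultimately show ?thesis using aK by blast
  qed
  have cycK: "is_cycle q H K"
    unfolding is_cycle_def
  proof (intro conjI disjI2)
    show "K \<noteq> {}" using xK by blast
    show "connected_set q K"
      unfolding connected_set_def
    proof (intro conjI ballI)
      show "\<exists>a b. a \<in> K \<and> b \<in> K \<and> a \<noteq> b" using xK aK a assms(6) by blast
    next
      fix b c assume b: "b \<in> K" and c: "c \<in> K"
      obtain pb where pb: "is_path q pb" "hd pb = x" "last pb = b" "set pb \<subseteq> K"
        using path_to[OF b] by blast
      obtain pc where pc: "is_path q pc" "hd pc = x" "last pc = c" "set pc \<subseteq> K"
        using path_to[OF c] by blast
      have u: "is_path q (rev pb)" "hd (rev pb) = b" "last (rev pb) = x" "set (rev pb) \<subseteq> K"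
        using is_path_rev[OF sym pb(1)] pb path_ne[OF pb(1)]
        by (auto simp: hd_rev last_rev)
      show "\<exists>w. is_path q w \<and> hd w = b \<and> last w = c \<and> set w \<subseteq> K"
      proof (cases "tl pc = []")
        case True
        then have "pc = [x]" using pc path_ne[OF pc(1)] by (cases pc) auto
        then have "c = x" using pc by simp
        then show ?thesis using u by blast
      next
        case False
        have q1: "q x (hd (tl pc)) > 0"
          using pc(1,2) False unfolding is_path_def
          by (cases pc) (auto simp: hd_conv_nth)
        have "is_path q (rev pb @ tl pc)"
          using u q1 by (intro is_path_append is_path_tl pc(1) False) auto
        moreover have "hd (rev pb @ tl pc) = b" using u path_ne[OF u(1)] by simp
        moreover have "last (rev pb @ tl pc) = c" using False pc by (simp add: last_tl)
        moreover have "set (rev pb @ tl pc) \<subseteq> K" using u pc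
          using list.set_sel(2)[of pc] False path_ne[OF pc(1)] by (auto simp del: set_rev)
        ultimately show ?thesis by blast
      qed
    qed
    show "\<forall>z\<in>K. \<forall>y\<in>boundary q K. H z < H y"
    proof (intro ballI)
      fix z y assume z: "z \<in> K" and y: "y \<in> boundary q K"
      then obtain z' where z': "z' \<in> K" "q z' y > 0" "y \<notin> K" by (auto simp: boundary_def)
      obtain p where p: "is_path q p" "hd p = x" "last p = z'" "Phi q H x z' = PhiP H p"
        using Phi_attained[OF irr] by blast
      have pp: "is_path q (p @ [y])"
        using p z' by (intro is_path_append) (auto simp: is_path_def)
      have "H y > h"
      proof (rule ccontr)
        assume "\<not> H y > h"
        have "Phi q H x y \<le> PhiP H (p @ [y])"
          using pp p path_ne[OF p(1)] by (intro Phi_le) auto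
        also have "\<dots> \<le> h"
          using p z' \<open>\<not> H y > h\<close> path_ne[OF p(1)]
          by (subst PhiP_le_iff) (auto simp: K_def PhiP_le_iff[symmetric])
        finally show False using z' by (simp add: K_def)
      qed
      then show "H z < H y" using HK[OF z] by simp
    qed
  qed
  have minK: "\<And>C. is_cycle q H C \<and> init_cycle q H A x \<subset> C \<Longrightarrow> K \<subseteq> C"
  proof -
    fix C assume C: "is_cycle q H C \<and> init_cycle q H A x \<subset> C"
    have xC: "x \<in> C" using C unfolding init_cycle_def by blast
    have ns: "\<not> (\<exists>z. C = {z})"
    proof
      assume "\<exists>z. C = {z}"
      then obtain z where "C = {z}" by blast
      then show False using C xC unfolding init_cycle_def by auto
    qed
    then have con: "connected_set q C" and bd: "\<forall>z\<in>C. \<forall>y\<in>boundary q C. H z < H y"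
      using C by (auto simp: is_cycle_def)
    obtain z where z: "z \<in> C" "z \<notin> init_cycle q H A x" using C by blast
    then have hz: "h \<le> Phi q H x z" unfolding init_cycle_def h_def by auto
    obtain p where p: "is_path q p" "hd p = x" "last p = z" "set p \<subseteq> C"
      using con xC z unfolding connected_set_def by blast
    obtain m where m: "m \<in> set p" "PhiP H p = H m" using PhiP_in[OF path_ne[OF p(1)], of H] by auto
    have mC: "m \<in> C" "h \<le> H m" using m p hz Phi_le[OF p(1-3), of H] by auto
    show "K \<subseteq> C"
    proof
      fix y assume y: "y \<in> K"
      obtain r where r: "is_path q r" "hd r = x" "last r = y" "set r \<subseteq> K"
        using path_to[OF y] by blast
      have "\<forall>i<length r. r ! i \<in> C"
      proof (intro allI impI)
        fix i assume "i < length r"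
        then show "r ! i \<in> C"
        proof (induction i)
          case 0 then show ?case using r xC by (simp add: hd_conv_nth[symmetric] path_ne[OF r(1)])
        next
          case (Suc i)
          have ri: "r ! i \<in> C" using Suc by simp
          have qq: "q (r ! i) (r ! Suc i) > 0" using r(1) Suc.prems by (simp add: is_path_def)
          show ?case
          proof (rule ccontr)
            assume "r ! Suc i \<notin> C"
            then have "r ! Suc i \<in> boundary q C" using ri qq by (auto simp: boundary_def)
            then have "H m < H (r ! Suc i)" using bd mC by blast
            moreover have "r ! Suc i \<in> K" using r(4) Suc.prems by (meson nth_mem subsetD)
            ultimately show False using HK mC by fastforce
          qed
        qed
      qed
      moreover have "length r - Suc 0 < length r" using path_ne[OF r(1)] by simp
      ultimately show "y \<in> C" using r path_ne[OF r(1)] by (metis last_conv_nth One_nat_def)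
    qed
  qed
  have RC: "rel_cycle q H A x = K"
    unfolding rel_cycle_def
    by (rule Least_equality) (use cycK init_sub minK in auto)
  show ?thesis
  proof
    assume w: "w \<in> Omega_opt q H x A"
    then have wO: "w \<in> Omega q x A" and wp: "PhiP H w = h"
      by (auto simp: Omega_opt_def h_def)
    have "set w \<subseteq> K" unfolding K_def using wO wp
      by (intro path_set_K) (auto simp: Omega_def)
    then show "w \<in> Omega q x A \<and> set w \<subseteq> rel_cycle q H A x" using wO RC by simp
  next
    assume w: "w \<in> Omega q x A \<and> set w \<subseteq> rel_cycle q H A x"
    then have wp: "is_path q w" "hd w = x" "last w \<in> A" and ws: "set w \<subseteq> K"
      using RC by (auto simp: Omega_def)
    have "PhiP H w \<le> h" using ws HK path_ne[OF wp(1)] by (subst PhiP_le_iff) auto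
    moreover have "h \<le> PhiP H w"
      using h_le[OF wp(3)] Phi_le[OF wp(1,2) refl, of H] by simp
    ultimately show "w \<in> Omega_opt q H x A" using w by (auto simp: Omega_opt_def h_def)
  qed
qed

end
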